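(* There is a universal constant $C>0$ such that the following holds. Let $S$ be a finite set, $T\ge1$ an integer, $(x_i)_{0\le i\le T}$ a sequence of (not necessarily distinct) elements of $S$, $r\ge2$, and $f:S\to(0,\infty)$ such that $\max\big(\frac{f(x_i)}{f(x_{i-1})},\frac{f(x_{i-1})}{f(x_i)}\big)\le r$ for $1\le i\le T$. Then $$\big(f(x_T)-f(x_0)\big)\log\frac{f(x_T)}{f(x_0)}\le C\big(1+(T-1)^2\log r\big)\sum_{t=1}^T\big(f(x_t)-f(x_{t-1})\big)\log\frac{f(x_t)}{f(x_{t-1})}.$$ *)

theory Defs
  imports "HOL-Analysis.Analysis"
begin

end

theory Submission
  imports Defs
begin

lemma tele:
  fixes a :: "nat \<Rightarrow> real"
  assumes "k \<le> n"
  shows "\<bar>a n - a k\<bar> \<le> (\<Sum>i\<in>{k..<n}. \<bar>a (Suc i) - a i\<bar>)"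
  using assms
proof (induction n)
  case 0 then show ?case by simp
next
  case (Suc n)
  show ?case
  proof (cases "k = Suc n")
    case True then show ?thesis by simp
  next
    case False
    then have "k \<le> n" using Suc.prems by simp
    then have "\<bar>a n - a k\<bar> \<le> (\<Sum>i\<in>{k..<n}. \<bar>a (Suc i) - a i\<bar>)" using Suc.IH by simp
    moreover have "(\<Sum>i\<in>{k..<Suc n}. \<bar>a (Suc i) - a i\<bar>) = (\<Sum>i\<in>{k..<n}. \<bar>a (Suc i) - a i\<bar>) + \<bar>a (Suc n) - a n\<bar>"
      using \<open>k \<le> n\<close> by simp
    ultimately show ?thesis by linarith
  qed
qed

lemma ln_ge: "0 < x \<Longrightarrow> 1 - 1/x \<le> ln (x::real)"
  using ln_le_minus_one[of "1/x"] by (simp add: ln_div)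

lemma step_sq:
  fixes a b m :: real
  assumes "a > 0" "b > 0" "m \<ge> a" "m \<ge> b"
  shows "(b-a)^2 \<le> m * ((b-a)*ln(b/a))"
proof (cases "b \<ge> a")
  case True
  have "ln (b/a) \<ge> 1 - a/b" using ln_ge[of "b/a"] assms by simp
  then have "(b-a)*ln(b/a) \<ge> (b-a)*(1 - a/b)" using True by (simp add: mult_left_mono)
  also have "(b-a)*(1-a/b) = (b-a)^2/b" using assms by (simp add: field_simps power2_eq_square)
  finally have h: "(b-a)^2/b \<le> (b-a)*ln(b/a)" .
  have "(b-a)^2 = b * ((b-a)^2/b)" using assms by simp
  also have "\<dots> \<le> m * ((b-a)^2/b)" using assms by (intro mult_right_mono) auto
  also have "\<dots> \<le> m * ((b-a)*ln(b/a))" using h assms by (intro mult_left_mono) auto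
  finally show ?thesis .
next
  case False
  have "ln (a/b) \<ge> 1 - b/a" using ln_ge[of "a/b"] assms by simp
  moreover have "ln (b/a) = - ln (a/b)" using assms by (simp add: ln_div)
  ultimately have "(a-b)*(-ln(b/a)) \<ge> (a-b)*(1 - b/a)" using False by (simp add: mult_left_mono)
  also have "(a-b)*(1-b/a) = (b-a)^2/a" using assms by (simp add: field_simps power2_eq_square)
  finally have h: "(b-a)^2/a \<le> (b-a)*ln(b/a)" by (simp add: algebra_simps)
  have "(b-a)^2 = a * ((b-a)^2/a)" using assms by simp
  also have "\<dots> \<le> m * ((b-a)^2/a)" using assms by (intro mult_right_mono) auto
  also have "\<dots> \<le> m * ((b-a)*ln(b/a))" using h assms by (intro mult_left_mono) auto
  finally show ?thesis .
qed

lemma g_nonneg: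
  fixes a b :: real
  assumes "a > 0" "b > 0"
  shows "0 \<le> (b-a)*ln(b/a)"
proof (cases "b \<ge> a")
  case True
  then have "ln (b/a) \<ge> 0" using assms by simp
  then show ?thesis using True by simp
next
  case False
  then have "ln (b/a) \<le> 0" using assms by simp
  then show ?thesis using False by (simp add: mult_nonpos_nonpos)
qed

lemma core:
  fixes a :: "nat \<Rightarrow> real" and T :: nat and r :: real
  assumes pos: "\<And>i. i \<le> T \<Longrightarrow> a i > 0" and T1: "T \<ge> 1" and r2: "r \<ge> 2"
    and step: "\<And>i. i < T \<Longrightarrow> \<bar>ln (a (Suc i)) - ln (a i)\<bar> \<le> ln r"
  shows "(a T - a 0) * ln (a T / a 0)
     \<le> 8 * (real T)^2 * ln r * (\<Sum>i<T. (a (Suc i) - a i) * ln (a (Suc i) / a i))"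
proof -
  define G where "G = (\<Sum>i<T. (a (Suc i) - a i) * ln (a (Suc i) / a i))"
  define m where "m = Max (a ` {..T})"
  have mge: "\<And>i. i \<le> T \<Longrightarrow> a i \<le> m" unfolding m_def by auto
  obtain k where k: "k \<le> T" "a k = m"
  proof -
    have "m \<in> a ` {..T}" unfolding m_def by (intro Max_in) auto
    then show ?thesis using that by auto
  qed
  have mpos: "m > 0" using mge[of 0] pos[of 0] by simp
  have lnr: "ln r \<ge> ln 2" using r2 by simp
  have ln2: "ln (2::real) \<ge> 1/2" using ln2_ge_two_thirds by simp
  define V where "V = (\<Sum>i<T. \<bar>a (Suc i) - a i\<bar>)"
  have sq: "(\<Sum>i<T. (a (Suc i) - a i)^2) \<le> m * G"
  proof -
    have "(\<Sum>i<T. (a (Suc i) - a i)^2) \<le> (\<Sum>i<T. m * ((a (Suc i) - a i) * ln (a (Suc i) / a i)))"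
      by (intro sum_mono step_sq) (auto intro: pos mge)
    also have "\<dots> = m * G" unfolding G_def by (simp add: sum_distrib_left)
    finally show ?thesis .
  qed
  have V2: "V^2 \<le> real T * (m * G)"
  proof -
    have "V^2 = (\<Sum>i<T. \<bar>a (Suc i) - a i\<bar>)^2" unfolding V_def ..
    also have "\<dots> \<le> (\<Sum>i<T. \<bar>a (Suc i) - a i\<bar>^2) * card {..<T}"
      by (rule sum_squared_le_sum_of_squares)
    also have "\<dots> = real T * (\<Sum>i<T. (a (Suc i) - a i)^2)" by simp
    also have "\<dots> \<le> real T * (m * G)" using sq by (intro mult_left_mono) auto
    finally show ?thesis .
  qed
  have VA: "\<bar>a T - a 0\<bar> \<le> V" unfolding V_def using tele[of 0 T a] by (simp add: atLeast0LessThan)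
  have V1: "m - a 0 \<le> (\<Sum>i\<in>{0..<k}. \<bar>a (Suc i) - a i\<bar>)" using tele[of 0 k a] k by simp
  have V2': "m - a T \<le> (\<Sum>i\<in>{k..<T}. \<bar>a (Suc i) - a i\<bar>)" using tele[of k T a] k by simp
  have "V = (\<Sum>i\<in>{0..<k}. \<bar>a (Suc i) - a i\<bar>) + (\<Sum>i\<in>{k..<T}. \<bar>a (Suc i) - a i\<bar>)"
    unfolding V_def using k by (simp add: atLeast0LessThan[symmetric] sum.atLeastLessThan_concat)
  then have VM: "2*m - a 0 - a T \<le> V" using V1 V2' by linarith
  have Dl: "\<bar>ln (a T) - ln (a 0)\<bar> \<le> real T * ln r"
  proof -
    have "\<bar>ln (a T) - ln (a 0)\<bar> \<le> (\<Sum>i\<in>{0..<T}. \<bar>ln (a (Suc i)) - ln (a i)\<bar>)"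
      using tele[of 0 T "\<lambda>i. ln (a i)"] by simp
    also have "\<dots> \<le> (\<Sum>i\<in>{0..<T}. ln r)" by (intro sum_mono step) auto
    finally show ?thesis by simp
  qed
  define lo where "lo = min (a 0) (a T)"
  define hi where "hi = max (a 0) (a T)"
  define A where "A = hi - lo"
  define D where "D = ln hi - ln lo"
  have a0: "a 0 > 0" and aT: "a T > 0" using pos by auto
  have lopos: "lo > 0" using a0 aT unfolding lo_def by simp
  have hilo: "lo \<le> hi" unfolding lo_def hi_def by simp
  have himm: "hi \<le> m" unfolding hi_def using mge[of 0] mge[of T] by simp
  have Ddef: "D = \<bar>ln (a T) - ln (a 0)\<bar>" unfolding D_def lo_def hi_def
    using a0 aT by (cases "a 0 \<le> a T") auto
  have Adef: "A = \<bar>a T - a 0\<bar>" unfolding A_def lo_def hi_def by (cases "a 0 \<le> a T") auto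
  have LHS: "(a T - a 0) * ln (a T / a 0) = A * D"
    unfolding Adef Ddef using a0 aT
    by (cases "a 0 \<le> a T") (auto simp: ln_div abs_if mult_nonpos_nonpos algebra_simps)
  have A0: "A \<ge> 0" and D0: "D \<ge> 0" using Adef Ddef by auto
  have DT: "D \<le> real T * ln r" using Dl Ddef by simp
  have VM2: "2*m - lo - hi \<le> V" using VM unfolding lo_def hi_def by (cases "a 0 \<le> a T") auto
  have Tlr: "real T * ln r \<ge> 1/2"
  proof -
    have "real T \<ge> 1" using T1 by simp
    moreover have "ln r \<ge> 0" using lnr ln2 by linarith
    ultimately have "real T * ln r \<ge> 1 * ln r" by (intro mult_right_mono) auto
    then show ?thesis using lnr ln2 by linarith
  qed
  have AV: "A \<le> V" using VA Adef by simp
  have V0: "V \<ge> 0" using AV A0 by linarith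
  have key: "A * D * m \<le> 8 * (real T * ln r) * V^2"
  proof (cases "m \<ge> 2*hi")
    case True
    then have Vm: "V \<ge> m" using VM2 hilo by linarith
    have Am: "A \<le> m" using himm lopos unfolding A_def by linarith
    have "A * D \<le> m * (real T * ln r)" using A0 D0 mpos DT Am by (simp add: mult_mono)
    then have "A * D * m \<le> m * (real T * ln r) * m" using mpos by (simp add: mult_right_mono)
    also have "\<dots> = (real T * ln r) * (m * m)" by (simp add: algebra_simps)
    also have "\<dots> \<le> (real T * ln r) * (V * V)"
    proof -
      have "m * m \<le> V * V" using Vm mpos by (simp add: mult_mono)
      then show ?thesis using Tlr by (simp add: mult_left_mono)
    qed
    also have "\<dots> \<le> 8 * (real T * ln r) * V^2" using Tlr by (simp add: power2_eq_square mult_right_mono)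
    finally show ?thesis .
  next
    case False
    show ?thesis
    proof (cases "lo \<le> hi/2")
      case True
      then have m4: "m \<le> 4*A" using False unfolding A_def by (simp add: field_simps)
      have "A * D \<le> V * (real T * ln r)" using A0 D0 DT AV by (simp add: mult_mono)
      moreover have "m \<le> 4 * V" using m4 AV by linarith
      ultimately have "A * D * m \<le> V * (real T * ln r) * (4*V)"
        using A0 D0 mpos V0 Tlr by (simp add: mult_mono)
      also have "\<dots> = 4 * (real T * ln r) * V^2" by (simp add: power2_eq_square)
      also have "\<dots> \<le> 8 * (real T * ln r) * V^2" using Tlr by (simp add: mult_right_mono)
      finally show ?thesis .
    next
      case True2: False
      have "D = ln (hi/lo)" unfolding D_def using lopos hilo by (simp add: ln_div)
      also have "\<dots> \<le> hi/lo - 1" using lopos hilo by (intro ln_le_minus_one) auto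
      also have "\<dots> = A/lo" unfolding A_def using lopos by (simp add: field_simps)
      finally have DA: "D \<le> A/lo" .
      have "A * D \<le> A * (A/lo)" by (rule mult_left_mono[OF DA A0])
      moreover have "m \<le> 2*hi" using False by linarith
      ultimately have "A * D * m \<le> A * (A/lo) * (2*hi)"
        by (rule mult_mono) (use A0 lopos mpos in auto)
      also have "\<dots> = A^2 * (2*hi/lo)" by (simp add: power2_eq_square)
      also have "\<dots> \<le> A^2 * 4"
      proof -
        have "2*hi/lo \<le> 4" using True2 lopos by (simp add: field_simps)
        then show ?thesis by (rule mult_left_mono) simp
      qed
      also have "\<dots> \<le> V^2 * 4" using A0 AV by (simp add: power_mono)
      also have "\<dots> \<le> 8 * (real T * ln r) * V^2"
      proof -
        have "4 \<le> 8 * (real T * ln r)" using Tlr by linarith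
        then have "4 * V^2 \<le> (8 * (real T * ln r)) * V^2" by (rule mult_right_mono) simp
        then show ?thesis by (simp add: mult.commute)
      qed
      finally show ?thesis .
    qed
  qed
  have "A * D \<le> 8 * (real T * ln r) * V^2 / m" using key mpos by (simp add: field_simps)
  also have "\<dots> \<le> 8 * (real T * ln r) * (real T * (m * G)) / m"
    using V2 mpos Tlr by (intro divide_right_mono mult_left_mono) auto
  also have "\<dots> = 8 * (real T)^2 * ln r * G" using mpos by (simp add: field_simps power2_eq_square)
  finally show ?thesis using LHS G_def by simp
qed

theorem mainTheorem12:
  shows "\<exists>C::real. C > 0 \<and>
    (\<forall>(S::nat set) (T::nat) (x::nat \<Rightarrow> nat) (r::real) (f::nat \<Rightarrow> real).
      finite S \<longrightarrow> T \<ge> 1 \<longrightarrow> (\<forall>i\<le>T. x i \<in> S) \<longrightarrow> r \<ge> 2 \<longrightarrow>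
      (\<forall>s\<in>S. f s > 0) \<longrightarrow>
      (\<forall>i\<in>{1..T}. max (f (x i) / f (x (i - 1))) (f (x (i - 1)) / f (x i)) \<le> r) \<longrightarrow>
      (f (x T) - f (x 0)) * ln (f (x T) / f (x 0))
        \<le> C * (1 + (real T - 1)^2 * ln r) *
          (\<Sum>t = 1..T. (f (x t) - f (x (t - 1))) * ln (f (x t) / f (x (t - 1)))))"
proof (intro exI[of _ 32] conjI allI impI)
  fix S :: "nat set" and T :: nat and x :: "nat \<Rightarrow> nat" and r :: real and f :: "nat \<Rightarrow> real"
  assume T1: "T \<ge> 1" and xS: "\<forall>i\<le>T. x i \<in> S" and r2: "r \<ge> 2" and fpos: "\<forall>s\<in>S. f s > 0"
    and rat: "\<forall>i\<in>{1..T}. max (f (x i) / f (x (i - 1))) (f (x (i - 1)) / f (x i)) \<le> r"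
  define a where "a i = f (x i)" for i
  have pos: "\<And>i. i \<le> T \<Longrightarrow> a i > 0" using xS fpos unfolding a_def by auto
  have lnr0: "ln r \<ge> 0" using r2 by simp
  have step: "\<And>i. i < T \<Longrightarrow> \<bar>ln (a (Suc i)) - ln (a i)\<bar> \<le> ln r"
  proof -
    fix i assume i: "i < T"
    have p: "a (Suc i) > 0" "a i > 0" using pos i by auto
    have m: "max (a (Suc i) / a i) (a i / a (Suc i)) \<le> r" using rat[rule_format, of "Suc i"] i
      unfolding a_def by simp
    have "ln (a (Suc i) / a i) \<le> ln r" using m p r2 by (subst ln_le_cancel_iff) auto
    moreover have "ln (a i / a (Suc i)) \<le> ln r" using m p r2 by (subst ln_le_cancel_iff) auto
    ultimately show "\<bar>ln (a (Suc i)) - ln (a i)\<bar> \<le> ln r" using p by (simp add: ln_div abs_if)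
  qed
  have sumeq: "(\<Sum>t = 1..T. (f (x t) - f (x (t - 1))) * ln (f (x t) / f (x (t - 1))))
      = (\<Sum>i<T. (a (Suc i) - a i) * ln (a (Suc i) / a i))"
  proof -
    define h where "h t = (f (x t) - f (x (t - 1))) * ln (f (x t) / f (x (t - 1)))" for t
    have e: "{1..T} = {Suc 0..Suc (T-1)}" using T1 by simp
    have "(\<Sum>t = 1..T. (f (x t) - f (x (t - 1))) * ln (f (x t) / f (x (t - 1))))
       = sum h {Suc 0..Suc (T-1)}" unfolding h_def e ..
    also have "\<dots> = (\<Sum>i = 0..T-1. h (Suc i))" by (rule sum.shift_bounds_cl_Suc_ivl)
    also have "\<dots> = (\<Sum>i = 0..T-1. (a (Suc i) - a i) * ln (a (Suc i) / a i))"
      by (simp add: h_def a_def)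
    also have "{0..T-1} = {..<T}" using T1 by auto
    finally show ?thesis .
  qed
  define G where "G = (\<Sum>i<T. (a (Suc i) - a i) * ln (a (Suc i) / a i))"
  have G0: "G \<ge> 0" unfolding G_def by (intro sum_nonneg g_nonneg) (auto intro: pos)
  show "(f (x T) - f (x 0)) * ln (f (x T) / f (x 0))
        \<le> 32 * (1 + (real T - 1)^2 * ln r) *
          (\<Sum>t = 1..T. (f (x t) - f (x (t - 1))) * ln (f (x t) / f (x (t - 1))))"
  proof (cases "T = 1")
    case True
    have "(f (x T) - f (x 0)) * ln (f (x T) / f (x 0)) = G" unfolding G_def a_def using True by simp
    then show ?thesis unfolding sumeq G_def[symmetric] using True G0 by simp
  next
    case False
    then have T2: "T \<ge> 2" using T1 by simp
    have c: "(f (x T) - f (x 0)) * ln (f (x T) / f (x 0)) \<le> 8 * (real T)^2 * ln r * G"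
      using core[of T a r, OF pos T1 r2 step] unfolding G_def a_def by simp
    have "(real T)^2 \<le> 4 * (real T - 1)^2"
    proof -
      have "real T \<le> 2 * (real T - 1)" using T2 by simp
      then have "(real T)^2 \<le> (2 * (real T - 1))^2" by (intro power_mono) auto
      then show ?thesis by (simp add: power2_eq_square algebra_simps)
    qed
    then have "(real T)^2 * ln r \<le> (4 * (real T - 1)^2) * ln r"
      using lnr0 by (rule mult_right_mono)
    then have "8 * (real T)^2 * ln r \<le> 32 * (1 + (real T - 1)^2 * ln r)"
      by (simp add: algebra_simps)
    then have "8 * (real T)^2 * ln r * G \<le> 32 * (1 + (real T - 1)^2 * ln r) * G"
      using G0 by (rule mult_right_mono)
    then show ?thesis using c unfolding sumeq G_def[symmetric] by linarith
  qed
qed (simp)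

end
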